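(* Let $\delta < \lambda$ be regular cardinals with $\lambda > \delta^+$, $\delta$ inaccessible, and $\lambda$ either inaccessible or the successor of a cardinal of cofinality $> \delta$. Then $\mathcal{K}(\delta,\lambda)$ satisfies the $\delta^{++}$-chain condition whenever $2^\delta = \delta^+$.
   Context: For regular $\kappa_0\le\kappa_1$, $\mathcal{K}(\kappa_0,\kappa_1)$ is the set of triples $\langle w,\alpha,\bar r\rangle$ with $w\subseteq\kappa_1$, $|w|=\kappa_0$, $\alpha<\kappa_0$, and $\bar r=\langle r_i:i\in w\rangle$ a sequence of functions from $\alpha$ to $\{0,1\}$, ordered by $\langle w^1,\alpha^1,\bar r^1\rangle\le\langle w^2,\alpha^2,\bar r^2\rangle$ iff $w^1\subseteq w^2$, $\alpha^1\le\alpha^2$, $r^1_i\subseteq r^2_i$ for $i\in w^1$, and $|\{i\in w^1: r^2_i\restriction(\alpha^2-\alpha^1)\text{ is not constantly }0\}|<\kappa_0$. *)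

theory Defs
  imports Main
begin

unbundle cardinal_syntax

(* Cardinals are represented as cardinal well-orders (Card_order r), compared by
   ordLess (<o) / ordIso (=o); ordinals below a cardinal kappa are the elements of
   Field kappa, ordered by kappa itself. *)

definition strong_limit :: "'a rel \<Rightarrow> bool" where
  "strong_limit k \<longleftrightarrow> (\<forall>X. X \<subseteq> Field k \<and> |X| <o k \<longrightarrow> |Pow X| <o k)"

definition inaccessible :: "'a rel \<Rightarrow> bool" where
  "inaccessible k \<longleftrightarrow> Card_order k \<and> natLeq <o k \<and> regularCard k \<and> strong_limit k"

definition cof_gt :: "'c rel \<Rightarrow> 'a rel \<Rightarrow> bool" where
  "cof_gt mu d \<longleftrightarrow> (\<forall>K. K \<subseteq> Field mu \<and> cofinal K mu \<longrightarrow> d <o card_of K)"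

(* Conditions <w, alpha, r> of K(k0,k1); r i beta = True means r_i(beta) = 1.
   r is required to vanish outside its domain (i in w, beta < alpha). *)
definition Kset :: "'a rel \<Rightarrow> 'b rel \<Rightarrow> ('b set \<times> 'a \<times> ('b \<Rightarrow> 'a \<Rightarrow> bool)) set" where
  "Kset k0 k1 = {(w, \<alpha>, r). w \<subseteq> Field k1 \<and> |w| =o k0 \<and> \<alpha> \<in> Field k0 \<and>
      (\<forall>i \<beta>. r i \<beta> \<longrightarrow> i \<in> w \<and> (\<beta>, \<alpha>) \<in> k0 \<and> \<beta> \<noteq> \<alpha>)}"

definition Kle :: "'a rel \<Rightarrow> ('b set \<times> 'a \<times> ('b \<Rightarrow> 'a \<Rightarrow> bool))
                   \<Rightarrow> ('b set \<times> 'a \<times> ('b \<Rightarrow> 'a \<Rightarrow> bool)) \<Rightarrow> bool" where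
  "Kle k0 p q = (case p of (w1, a1, r1) \<Rightarrow> case q of (w2, a2, r2) \<Rightarrow>
      w1 \<subseteq> w2 \<and> (a1, a2) \<in> k0 \<and>
      (\<forall>i \<in> w1. \<forall>\<beta>. (\<beta>, a1) \<in> k0 \<and> \<beta> \<noteq> a1 \<longrightarrow> r2 i \<beta> = r1 i \<beta>) \<and>
      |{i \<in> w1. \<exists>\<beta>. (a1, \<beta>) \<in> k0 \<and> (\<beta>, a2) \<in> k0 \<and> \<beta> \<noteq> a2 \<and> r2 i \<beta>}| <o k0)"

definition chain_condition :: "'p set \<Rightarrow> ('p \<Rightarrow> 'p \<Rightarrow> bool) \<Rightarrow> 'c rel \<Rightarrow> bool" where
  "chain_condition P le theta \<longleftrightarrow>
     (\<forall>A. A \<subseteq> P \<and> (\<forall>p\<in>A. \<forall>q\<in>A. p \<noteq> q \<longrightarrow> \<not> (\<exists>s\<in>P. le p s \<and> le q s))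
        \<longrightarrow> |A| <o theta)"

end

theory Submission
  imports Defs
begin

lemma fin_le_inf: "finite A \<Longrightarrow> \<not> finite B \<Longrightarrow> |A| \<le>o |B|"
  by (rule ordLess_imp_ordLeq, rule finite_ordLess_infinite[OF card_of_Well_order card_of_Well_order]) (simp_all add: Field_card_of)

lemma pow_le: assumes "|A| \<le>o |B|" shows "|Pow A| \<le>o |Pow B|"
proof -
  obtain f where f: "inj_on f A" "f ` A \<subseteq> B" using card_of_ordLeq[THEN iffD2, OF assms] by blast
  have "inj_on (image f) (Pow A)" using f(1) inj_on_image_Pow by blast
  moreover have "image f ` Pow A \<subseteq> Pow B" using f(2) by auto
  ultimately show ?thesis by (intro card_of_ordLeq[THEN iffD1] exI conjI)
qed

lemma L1:
  fixes X :: "'x set" and D :: "'d set"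
  assumes X: "|X| \<le>o |Pow D|" and D: "\<not> finite D"
  shows "|{Y. Y \<subseteq> X \<and> |Y| \<le>o |D|}| \<le>o |Pow D|"
proof -
  obtain f where f: "inj_on f X" "f ` X \<subseteq> Pow D" using card_of_ordLeq[THEN iffD2, OF X] by blast
  define g where "g Y = (SOME g. g ` D = Y)" for Y :: "'x set"
  define code where "code Y = (Y = {}, {(d,e). d \<in> D \<and> e \<in> D \<and> e \<in> f (g Y d)})" for Y
  let ?S = "{Y. Y \<subseteq> X \<and> |Y| \<le>o |D|}"
  have gY: "g Y ` D = Y" if "Y \<in> ?S" "Y \<noteq> {}" for Y
  proof -
    have "\<exists>g. g ` D = Y" using card_of_ordLeq2[THEN iffD2, of Y D] that by simp
    thus ?thesis unfolding g_def by (rule someI_ex)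
  qed
  have "inj_on code ?S"
  proof (rule inj_onI)
    fix Y1 Y2 assume Y: "Y1 \<in> ?S" "Y2 \<in> ?S" "code Y1 = code Y2"
    show "Y1 = Y2"
    proof (cases "Y1 = {}")
      case True thus ?thesis using Y(3) unfolding code_def by auto
    next
      case False
      hence ne: "Y2 \<noteq> {}" using Y(3) unfolding code_def by auto
      have eq: "g Y1 d = g Y2 d" if d: "d \<in> D" for d
      proof -
        have m1: "g Y1 d \<in> X" using gY[OF Y(1) False] d Y(1) by blast
        have m2: "g Y2 d \<in> X" using gY[OF Y(2) ne] d Y(2) by blast
        have s1: "f (g Y1 d) \<subseteq> D" using m1 f(2) by blast
        have s2: "f (g Y2 d) \<subseteq> D" using m2 f(2) by blast
        have "f (g Y1 d) = f (g Y2 d)"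
        proof
          show "f (g Y1 d) \<subseteq> f (g Y2 d)"
          proof
            fix e assume "e \<in> f (g Y1 d)"
            hence "(d,e) \<in> snd (code Y1)" using d s1 unfolding code_def by auto
            thus "e \<in> f (g Y2 d)" using Y(3) unfolding code_def by auto
          qed
        next
          show "f (g Y2 d) \<subseteq> f (g Y1 d)"
          proof
            fix e assume "e \<in> f (g Y2 d)"
            hence "(d,e) \<in> snd (code Y2)" using d s2 unfolding code_def by auto
            thus "e \<in> f (g Y1 d)" using Y(3) unfolding code_def by auto
          qed
        qed
        thus ?thesis using f(1) m1 m2 inj_on_def by metis
      qed
      have "Y1 = g Y1 ` D" using gY[OF Y(1) False] by simp
      also have "\<dots> = g Y2 ` D" using eq by auto
      also have "\<dots> = Y2" using gY[OF Y(2) ne] by simp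
      finally show ?thesis .
    qed
  qed
  moreover have "code ` ?S \<subseteq> UNIV \<times> Pow (D \<times> D)" unfolding code_def by auto
  ultimately have 1: "|?S| \<le>o |(UNIV::bool set) \<times> Pow (D \<times> D)|" by (intro card_of_ordLeq[THEN iffD1] exI conjI)
  have infP: "\<not> finite (Pow (D \<times> D))" using D by (auto simp: finite_cartesian_product_iff)
  have 2: "|(UNIV::bool set) \<times> Pow (D \<times> D)| =o |Pow (D \<times> D)|"
    by (rule card_of_Times_infinite_simps(3)[OF infP _ fin_le_inf[OF _ infP]]) simp_all
  have 3: "|Pow (D \<times> D)| \<le>o |Pow D|"
    by (rule pow_le, rule ordIso_imp_ordLeq, rule card_of_Times_same_infinite[OF D])
  show ?thesis by (rule ordLeq_transitive[OF ordLeq_ordIso_trans[OF 1 2] 3])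
qed

definition tp :: "('b set \<times> 'a \<times> ('b \<Rightarrow> 'a \<Rightarrow> bool)) \<Rightarrow> 'b set \<Rightarrow> ('b set \<times> 'a \<times> ('b \<Rightarrow> 'a \<Rightarrow> bool))" where
  "tp q t = (t, fst (snd q), \<lambda>i \<beta>. i \<in> t \<and> snd (snd q) i \<beta>)"

definition Types :: "'a set \<Rightarrow> 'b set \<Rightarrow> ('b set \<times> 'a \<times> ('b \<Rightarrow> 'a \<Rightarrow> bool)) set" where
  "Types D X = {(t,\<alpha>,s). t \<subseteq> X \<and> |t| \<le>o |D| \<and> \<alpha> \<in> D \<and> (\<forall>i \<beta>. s i \<beta> \<longrightarrow> i \<in> t \<and> \<beta> \<in> D)}"

lemma timesP:
  assumes "|A| \<le>o |Pow D|" "|B| \<le>o |Pow D|" "\<not> finite D"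
  shows "|A \<times> B| \<le>o |Pow D|"
  by (rule card_of_Times_ordLeq_infinite_Field[OF _ assms(1,2) card_of_Card_order]) (simp add: Field_card_of assms(3))

lemma L2:
  fixes X :: "'b set" and D :: "'a set"
  assumes X: "|X| \<le>o |Pow D|" and D: "\<not> finite D"
  shows "|Types D X| \<le>o |Pow D|"
proof -
  define h where "h T = (fst T, fst (snd T), {(i,\<beta>). snd (snd T) i \<beta>})"
    for T :: "'b set \<times> 'a \<times> ('b \<Rightarrow> 'a \<Rightarrow> bool)"
  let ?S1 = "{Y. Y \<subseteq> X \<and> |Y| \<le>o |D|}"
  let ?S2 = "{Z. Z \<subseteq> X \<times> D \<and> |Z| \<le>o |D|}"
  have "inj_on h (Types D X)"
  proof (rule inj_onI)
    fix T1 T2 assume "T1 \<in> Types D X" "T2 \<in> Types D X" "h T1 = h T2"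
    obtain t1 a1 s1 where 1: "T1 = (t1,a1,s1)" by (cases T1) auto
    obtain t2 a2 s2 where 2: "T2 = (t2,a2,s2)" by (cases T2) auto
    have "t1 = t2" "a1 = a2" "{(i,\<beta>). s1 i \<beta>} = {(i,\<beta>). s2 i \<beta>}" using \<open>h T1 = h T2\<close> 1 2 unfolding h_def by auto
    moreover have "s1 = s2" using calculation(3) by (auto simp: fun_eq_iff)
    ultimately show "T1 = T2" using 1 2 by simp
  qed
  moreover have "h ` Types D X \<subseteq> ?S1 \<times> (D \<times> ?S2)"
  proof
    fix T assume T: "T \<in> h ` Types D X"
    then obtain t a s where ts: "(t,a,s) \<in> Types D X" "T = h (t,a,s)" by auto
    have tD: "|t| \<le>o |D|" and tX: "t \<subseteq> X" and aD: "a \<in> D" and sD: "\<forall>i \<beta>. s i \<beta> \<longrightarrow> i \<in> t \<and> \<beta> \<in> D"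
      using ts(1) unfolding Types_def by auto
    have sub: "{(i,\<beta>). s i \<beta>} \<subseteq> t \<times> D" using sD by auto
    have "|t \<times> D| \<le>o |D|"
      by (rule card_of_Times_ordLeq_infinite_Field[OF _ tD ordIso_imp_ordLeq[OF card_of_refl] card_of_Card_order]) (simp add: Field_card_of D)
    hence "|{(i,\<beta>). s i \<beta>}| \<le>o |D|" by (rule ordLeq_transitive[OF card_of_mono1[OF sub]])
    thus "T \<in> ?S1 \<times> (D \<times> ?S2)" using ts(2) tD tX aD sub unfolding h_def by auto
  qed
  ultimately have 1: "|Types D X| \<le>o |?S1 \<times> (D \<times> ?S2)|" by (intro card_of_ordLeq[THEN iffD1] exI conjI)
  have DP: "|D| \<le>o |Pow D|" by (rule ordLess_imp_ordLeq, rule card_of_Pow)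
  have "|X \<times> D| \<le>o |Pow D|" using timesP[OF X DP D] .
  hence "|?S2| \<le>o |Pow D|" using L1[OF _ D] by blast
  moreover have "|?S1| \<le>o |Pow D|" using L1[OF X D] .
  ultimately have "|?S1 \<times> (D \<times> ?S2)| \<le>o |Pow D|" using timesP[OF _ timesP[OF DP _ D] D] by blast
  thus ?thesis by (rule ordLeq_transitive[OF 1])
qed

definition rep where "rep A T = (SOME p. p \<in> A \<and> fst T \<subseteq> fst p \<and> tp p (fst T) = T)"

lemma rep:
  assumes "q \<in> A" "t \<subseteq> fst q"
  shows "rep A (tp q t) \<in> A \<and> t \<subseteq> fst (rep A (tp q t)) \<and> tp (rep A (tp q t)) t = tp q t"
proof -
  have "q \<in> A \<and> fst (tp q t) \<subseteq> fst q \<and> tp q (fst (tp q t)) = tp q t"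
    using assms by (simp add: tp_def)
  hence "\<exists>p. p \<in> A \<and> fst (tp q t) \<subseteq> fst p \<and> tp p (fst (tp q t)) = tp q t" by blast
  hence "rep A (tp q t) \<in> A \<and> fst (tp q t) \<subseteq> fst (rep A (tp q t)) \<and> tp (rep A (tp q t)) (fst (tp q t)) = tp q t"
    unfolding rep_def by (rule someI_ex)
  thus ?thesis by (simp add: tp_def)
qed

inductive stg :: "'c rel \<Rightarrow> ('b set \<times> 'a \<times> ('b \<Rightarrow> 'a \<Rightarrow> bool)) set \<Rightarrow> 'c \<Rightarrow> 'b \<Rightarrow> bool"
  for W A where
  "(y,x) \<in> W \<Longrightarrow> y \<noteq> x \<Longrightarrow> q \<in> A \<Longrightarrow> t \<subseteq> fst q \<Longrightarrow> \<forall>i\<in>t. stg W A y i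
     \<Longrightarrow> j \<in> fst (rep A (tp q t)) \<Longrightarrow> stg W A x j"


lemma stg_mono:
  assumes "wo_rel W" "(a,b) \<in> W" "stg W A a j"
  shows "stg W A b j"
  using assms(3)
proof cases
  case (1 y q t)
  have "(y,b) \<in> W" using 1(1) assms(2) assms(1) wo_rel.TRANS trans_def by metis
  moreover have "y \<noteq> b"
  proof
    assume "y = b"
    hence "a = b" using 1(1) assms(2) assms(1) wo_rel.ANTISYM antisymD by metis
    thus False using 1(2) \<open>y = b\<close> by simp
  qed
  ultimately show ?thesis using 1 stg.intros by metis
qed

lemma emp_less: "Card_order r \<Longrightarrow> \<not> finite (Field r) \<Longrightarrow> |{}| <o r"
proof -
  assume C: "Card_order r" and I: "\<not> finite (Field r)"
  have "Field r \<noteq> {}" using I by auto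
  hence "|{}| <o |Field r|" using card_of_ordLess[of "Field r" "{}"] by auto
  thus ?thesis by (rule ordLess_ordIso_trans[OF _ card_of_Field_ordIso[OF C]])
qed

theorem lemma5:
  fixes del :: "'a rel" and lam :: "'b rel"
  assumes "Card_order del" "Cinfinite del" "regularCard del"
    and "Card_order lam" "Cinfinite lam" "regularCard lam"
    and "del <o lam"
    and "cardSuc del <o lam"
    and "inaccessible del"
    and "inaccessible lam \<or>
         (\<exists>mu :: 'b rel. Card_order mu \<and> Cinfinite mu \<and> cof_gt mu del \<and> lam =o cardSuc mu)"
    and "|Pow (Field del)| =o cardSuc del"
  shows "chain_condition (Kset del lam) (Kle del) (cardSuc (cardSuc del))"
proof -
  let ?D = "Field del"
  have CO: "Card_order del" by fact
  have infD: "\<not> finite ?D" using assms(2) unfolding cinfinite_def by simp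
  have Dd: "|?D| =o del" using card_of_Field_ordIso[OF CO] .
  have DP: "|?D| \<le>o |Pow ?D|" by (rule ordLess_imp_ordLeq, rule card_of_Pow)
  have delP: "del \<le>o |Pow ?D|" by (rule ordIso_ordLeq_trans[OF ordIso_symmetric[OF Dd] DP])
  have wod: "wo_rel del" using Card_order_wo_rel[OF CO] .
  have refl: "(a,a) \<in> del" if "a \<in> ?D" for a
    using wod wo_rel.REFL refl_onD that by fastforce
  have antis: "a = b" if "(a,b) \<in> del" "(b,a) \<in> del" for a b
    using wod wo_rel.ANTISYM antisymD that by metis
  define W where "W = cardSuc del"
  have WCO: "Card_order W" unfolding W_def using cardSuc_Card_order[OF CO] .
  have Wwo: "wo_rel W" using Card_order_wo_rel[OF WCO] .
  have infW: "\<not> finite (Field W)" using Cinfinite_cardSuc[OF assms(2)] unfolding W_def cinfinite_def by simp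
  have WP: "|Field W| =o |Pow ?D|"
    by (rule ordIso_transitive[OF card_of_Field_ordIso[OF WCO]]) (unfold W_def, rule ordIso_symmetric[OF assms(11)])
  have infP: "\<not> finite (Pow ?D)" using infD by simp
  show ?thesis unfolding chain_condition_def
  proof (intro allI impI, elim conjE)
    fix A assume AK: "A \<subseteq> Kset del lam"
      and anti: "\<forall>p\<in>A. \<forall>q\<in>A. p \<noteq> q \<longrightarrow> \<not> (\<exists>s\<in>Kset del lam. Kle del p s \<and> Kle del q s)"
    have Kw: "|fst p| =o del" if "p \<in> A" for p using that AK unfolding Kset_def by auto
    have KwP: "|fst p| \<le>o |Pow ?D|" if "p \<in> A" for p
      by (rule ordIso_ordLeq_trans[OF Kw[OF that] delP])
    define N where "N x = {j. stg W A x j}" for x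
    have Nsize: "|N x| \<le>o |Pow ?D|" for x
    proof (induction x rule: wo_rel.well_order_induct[OF Wwo])
      case (1 x)
      define I where "I y = {tp q t |q t. q \<in> A \<and> t \<subseteq> fst q \<and> t \<subseteq> N y}" for y
      have sub: "N x \<subseteq> (\<Union>y\<in>underS W x. \<Union>T\<in>I y. fst (rep A T))"
      proof
        fix j assume "j \<in> N x"
        hence "stg W A x j" unfolding N_def by simp
        thus "j \<in> (\<Union>y\<in>underS W x. \<Union>T\<in>I y. fst (rep A T))"
        proof cases
          case (1 y q t)
          have "y \<in> underS W x" using 1 unfolding underS_def by auto
          moreover have "t \<subseteq> N y" using 1(5) unfolding N_def by blast
          hence "tp q t \<in> I y" using 1(3,4) unfolding I_def by blast
          ultimately show ?thesis using 1 by blast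
        qed
      qed
      have "|\<Union>y\<in>underS W x. \<Union>T\<in>I y. fst (rep A T)| \<le>o |Pow ?D|"
      proof (rule card_of_UNION_ordLeq_infinite[OF infP])
        show "|underS W x| \<le>o |Pow ?D|"
          by (rule ordLeq_ordIso_trans[OF card_of_mono1[OF Order_Relation.underS_Field] WP])
        show "\<forall>y\<in>underS W x. |\<Union>T\<in>I y. fst (rep A T)| \<le>o |Pow ?D|"
        proof
          fix y assume y: "y \<in> underS W x"
          have "y \<noteq> x \<and> (y, x) \<in> W" using y unfolding underS_def by simp
          hence IH: "|N y| \<le>o |Pow ?D|" using 1 by simp
          have "I y \<subseteq> Types ?D (N y)"
          proof
            fix T assume "T \<in> I y"
            then obtain q t where qt: "T = tp q t" "q \<in> A" "t \<subseteq> fst q" "t \<subseteq> N y" unfolding I_def by auto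
            obtain w a r where q: "q = (w,a,r)" by (cases q) auto
            have qK: "w \<subseteq> Field lam" "|w| =o del" "a \<in> ?D" "\<forall>i \<beta>. r i \<beta> \<longrightarrow> i \<in> w \<and> (\<beta>, a) \<in> del \<and> \<beta> \<noteq> a"
              using qt(2) AK q unfolding Kset_def by auto
            have "|t| \<le>o |w|" using card_of_mono1[OF qt(3)] q by simp
            hence "|t| \<le>o del" by (rule ordLeq_ordIso_trans[OF _ qK(2)])
            hence "|t| \<le>o |?D|" by (rule ordLeq_ordIso_trans[OF _ ordIso_symmetric[OF Dd]])
            moreover have "\<forall>i \<beta>. r i \<beta> \<longrightarrow> \<beta> \<in> ?D" using qK(4) unfolding Field_def by blast
            ultimately show "T \<in> Types ?D (N y)" using qt q qK unfolding Types_def tp_def by auto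
          qed
          hence "|I y| \<le>o |Pow ?D|" by (rule ordLeq_transitive[OF card_of_mono1 L2[OF IH infD]])
          moreover have "\<forall>T\<in>I y. |fst (rep A T)| \<le>o |Pow ?D|"
          proof
            fix T assume "T \<in> I y"
            then obtain q t where qt: "T = tp q t" "q \<in> A" "t \<subseteq> fst q" unfolding I_def by auto
            show "|fst (rep A T)| \<le>o |Pow ?D|" using rep[OF qt(2,3)] qt(1) KwP by auto
          qed
          ultimately show "|\<Union>T\<in>I y. fst (rep A T)| \<le>o |Pow ?D|"
            by (rule card_of_UNION_ordLeq_infinite[OF infP])
        qed
      qed
      thus ?case by (rule ordLeq_transitive[OF card_of_mono1[OF sub]])
    qed
    have chain: "relChain (cardSuc del) N"
    proof -
      have "N i \<subseteq> N j" if ij: "(i,j) \<in> W" for i j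
      proof
        fix k assume "k \<in> N i"
        thus "k \<in> N j" unfolding N_def using stg_mono[OF Wwo ij] by simp
      qed
      thus ?thesis unfolding relChain_def W_def by blast
    qed
    define NN where "NN = (\<Union>x\<in>Field W. N x)"
    have NNsize: "|NN| \<le>o |Pow ?D|" unfolding NN_def
      by (rule card_of_UNION_ordLeq_infinite[OF infP ordIso_imp_ordLeq[OF WP]]) (simp add: Nsize)
    have key: "fst q \<subseteq> NN" if qA: "q \<in> A" for q
    proof (rule ccontr)
      assume nq: "\<not> fst q \<subseteq> NN"
      obtain w a r where q: "q = (w,a,r)" by (cases q) auto
      have qK: "w \<subseteq> Field lam" "|w| =o del" "a \<in> ?D" "\<forall>i \<beta>. r i \<beta> \<longrightarrow> i \<in> w \<and> (\<beta>, a) \<in> del \<and> \<beta> \<noteq> a"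
        using qA AK q unfolding Kset_def by auto
      define t where "t = w \<inter> NN"
      have tw: "t \<subseteq> fst q" using q t_def by auto
      have "t \<subseteq> w" by (simp add: t_def)
      hence tdel: "|t| \<le>o del" by (rule ordLeq_ordIso_trans[OF card_of_mono1 qK(2)])
      have "t \<subseteq> (\<Union>i\<in>Field (cardSuc del). N i)" unfolding t_def NN_def W_def by blast
      then obtain y where y: "y \<in> Field W" "t \<subseteq> N y"
        using cardSuc_UNION[OF CO infD chain _ tdel] unfolding W_def by blast
      have "Field W \<noteq> under W y" using Card_order_infinite_not_under[OF WCO infW] by blast
      then obtain x where x: "x \<in> Field W" "x \<notin> under W y"
        using under_Field[of W y] by blast
      have "(y,x) \<in> W \<or> (x,y) \<in> W" using wo_rel.TOTALS[OF Wwo] x(1) y(1) by blast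
      hence yx: "(y,x) \<in> W" using x(2) unfolding under_def by blast
      have ynx: "y \<noteq> x"
      proof
        assume "y = x"
        have "(x,x) \<in> W" using wo_rel.REFL[OF Wwo] x(1) refl_onD by fastforce
        thus False using x(2) \<open>y = x\<close> unfolding under_def by blast
      qed
      define p where "p = rep A (tp q t)"
      have pp: "p \<in> A" "t \<subseteq> fst p" "tp p t = tp q t" using rep[OF qA tw] unfolding p_def by auto
      have "fst p \<subseteq> N x"
      proof
        fix j assume "j \<in> fst p"
        hence "stg W A x j" using stg.intros[OF yx ynx qA tw] y(2) unfolding p_def N_def by auto
        thus "j \<in> N x" unfolding N_def by simp
      qed
      hence pN: "fst p \<subseteq> NN" using x(1) unfolding NN_def by blast
      hence pq: "p \<noteq> q" using nq by auto
      obtain wp ap rp where p: "p = (wp,ap,rp)" by (cases p) auto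
      have pK: "wp \<subseteq> Field lam" "|wp| =o del" "ap \<in> ?D" "\<forall>i \<beta>. rp i \<beta> \<longrightarrow> i \<in> wp \<and> (\<beta>, ap) \<in> del \<and> \<beta> \<noteq> ap"
        using pp(1) AK p unfolding Kset_def by auto
      have aeq: "ap = a" using pp(3) p q unfolding tp_def by auto
      have req: "rp i b = r i b" if "i \<in> t" for i b
      proof -
        have "(\<lambda>i b. i \<in> t \<and> rp i b) = (\<lambda>i b. i \<in> t \<and> r i b)" using pp(3) p q unfolding tp_def by auto
        hence "(i \<in> t \<and> rp i b) = (i \<in> t \<and> r i b)" by metis
        thus ?thesis using that by simp
      qed
      have inter: "i \<in> t" if "i \<in> wp" "i \<in> w" for i using that pN p t_def by auto
      define s where "s = (wp \<union> w, a, \<lambda>i b. rp i b \<or> r i b)"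
      have sK: "s \<in> Kset del lam"
      proof -
        have "|wp \<union> w| \<le>o del"
          by (rule card_of_Un_ordLeq_infinite_Field[OF infD ordIso_imp_ordLeq[OF pK(2)] ordIso_imp_ordLeq[OF qK(2)] CO])
        moreover have "del \<le>o |wp \<union> w|"
          by (rule ordIso_ordLeq_trans[OF ordIso_symmetric[OF pK(2)] card_of_mono1[OF Un_upper1]])
        ultimately have "|wp \<union> w| =o del" by (simp add: ordIso_iff_ordLeq)
        thus ?thesis unfolding s_def Kset_def using pK qK aeq by auto
      qed
      have emp: "{i \<in> X. \<exists>\<beta>. (a,\<beta>) \<in> del \<and> (\<beta>,a) \<in> del \<and> \<beta> \<noteq> a \<and> P i \<beta>} = {}" for X P
        using antis by blast
      have c3: "\<forall>i\<in>wp. \<forall>\<beta>. (\<beta>,a) \<in> del \<and> \<beta> \<noteq> a \<longrightarrow> (rp i \<beta> \<or> r i \<beta>) = rp i \<beta>"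
      proof (intro ballI allI impI)
        fix i \<beta> assume i: "i \<in> wp"
        show "(rp i \<beta> \<or> r i \<beta>) = rp i \<beta>"
        proof (cases "i \<in> w")
          case True thus ?thesis using req[OF inter[OF i True]] by simp
        next
          case False thus ?thesis using qK(4) by blast
        qed
      qed
      have c4: "\<forall>i\<in>w. \<forall>\<beta>. (\<beta>,a) \<in> del \<and> \<beta> \<noteq> a \<longrightarrow> (rp i \<beta> \<or> r i \<beta>) = r i \<beta>"
      proof (intro ballI allI impI)
        fix i \<beta> assume i: "i \<in> w"
        show "(rp i \<beta> \<or> r i \<beta>) = r i \<beta>"
        proof (cases "i \<in> wp")
          case True thus ?thesis using req[OF inter[OF True i]] by simp
        next
          case False thus ?thesis using pK(4) by blast
        qed
      qed
      have Kp: "Kle del p s"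
        unfolding Kle_def p s_def using c3 refl[OF qK(3)] emp_less[OF CO infD]
        by (simp add: aeq emp)
      have Kq: "Kle del q s"
        unfolding Kle_def q s_def using c4 refl[OF qK(3)] emp_less[OF CO infD]
        by (simp add: emp)
      show False using anti pp(1) qA pq sK Kp Kq by blast
    qed
    have "A \<subseteq> Types ?D NN"
    proof
      fix q assume qA: "q \<in> A"
      obtain w a r where q: "q = (w,a,r)" by (cases q) auto
      have qK: "w \<subseteq> Field lam" "|w| =o del" "a \<in> ?D" "\<forall>i \<beta>. r i \<beta> \<longrightarrow> i \<in> w \<and> (\<beta>, a) \<in> del \<and> \<beta> \<noteq> a"
        using qA AK q unfolding Kset_def by auto
      have "|w| \<le>o |?D|" by (rule ordIso_imp_ordLeq[OF ordIso_transitive[OF qK(2) ordIso_symmetric[OF Dd]]])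
      moreover have "\<forall>i \<beta>. r i \<beta> \<longrightarrow> \<beta> \<in> ?D" using qK(4) unfolding Field_def by blast
      ultimately show "q \<in> Types ?D NN" using key[OF qA] q qK unfolding Types_def by auto
    qed
    hence "|A| \<le>o |Pow ?D|" by (rule ordLeq_transitive[OF card_of_mono1 L2[OF NNsize infD]])
    moreover have "|Pow ?D| <o cardSuc (cardSuc del)"
      by (rule ordIso_ordLess_trans[OF assms(11) cardSuc_greater[OF cardSuc_Card_order[OF CO]]])
    ultimately show "|A| <o cardSuc (cardSuc del)" by (rule ordLeq_ordLess_trans)
  qed
qed

end
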